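(* Let $T$ be a set of three affinely independent points in $\mathbb{N}_0^2$. Then for every $\alpha\in T$ there exists a point $\beta\in E_1^\infty(T)\setminus\{\alpha\}$ such that $\beta-\alpha\in\mathbb{N}^2$ (both entries strictly positive).
   Context: $\mathbb{N}=\{1,2,\dots\}$, $\mathbb{N}_0=\{0,1,2,\dots\}$. For nonempty $\Gamma\subseteq\mathbb{N}_0^d$, $\Lambda(\Gamma)$ is the coset in $\mathbb{Z}^d$ generated by $\Gamma$ (smallest coset of a subgroup of $\mathbb{Z}^d$ containing $\Gamma$); each $\lambda\in\Lambda(\Gamma)$ can be written $\lambda=\gamma+\sum_{\alpha\in\Gamma,\alpha\neq\gamma}m_{\gamma,\alpha}(\alpha-\gamma)$ with $\gamma\in\Gamma$ and integers $m_{\gamma,\alpha}$, finitely many nonzero. $d(\Gamma,\lambda)$ is the infimum over all such representations of $\max\big(\sum_{m_{\gamma,\alpha}>0}m_{\gamma,\alpha},-\sum_{m_{\gamma,\alpha}<0}m_{\gamma,\alpha}\big)$, and $E_n(\Gamma)=\{\lambda\in\Lambda(\Gamma)\cap\mathbb{N}_0^d:d(\Gamma,\lambda)\leq n\}$. Set $E_n^1(T)=E_n(T)$, $E_n^{k+1}(T)=E_n(E_n^k(T))$, and $E_n^\infty(T)=\bigcup_{k\geq1}E_n^k(T)$. *)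

theory Defs
  imports "HOL-Analysis.Analysis" "HOL-Library.Extended_Nat"
begin

type_synonym pt = "int \<times> int"

definition smul :: "int \<Rightarrow> pt \<Rightarrow> pt" where
  "smul c v = (c * fst v, c * snd v)"

definition in_N0sq :: "pt \<Rightarrow> bool" where
  "in_N0sq v \<longleftrightarrow> fst v \<ge> 0 \<and> snd v \<ge> 0"

definition is_rep :: "pt set \<Rightarrow> pt \<Rightarrow> pt \<Rightarrow> (pt \<Rightarrow> int) \<Rightarrow> bool" where
  "is_rep G lam g m \<longleftrightarrow> g \<in> G \<and> finite {a. m a \<noteq> 0}
     \<and> (\<forall>a. m a \<noteq> 0 \<longrightarrow> a \<in> G \<and> a \<noteq> g)
     \<and> lam = g + (\<Sum>a\<in>{a. m a \<noteq> 0}. smul (m a) (a - g))"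

definition Lam :: "pt set \<Rightarrow> pt set" where
  "Lam G = {lam. \<exists>g m. is_rep G lam g m}"

definition rep_cost :: "(pt \<Rightarrow> int) \<Rightarrow> nat" where
  "rep_cost m = nat (max (\<Sum>a\<in>{a. m a > 0}. m a) (- (\<Sum>a\<in>{a. m a < 0}. m a)))"

definition dG :: "pt set \<Rightarrow> pt \<Rightarrow> enat" where
  "dG G lam = (INF gm \<in> {(g, m). is_rep G lam g m}. enat (rep_cost (snd gm)))"

definition En :: "nat \<Rightarrow> pt set \<Rightarrow> pt set" where
  "En n G = {lam \<in> Lam G. in_N0sq lam \<and> dG G lam \<le> enat n}"

text \<open>En_iter n k T = E_n^{k+1}(T).\<close>
fun En_iter :: "nat \<Rightarrow> nat \<Rightarrow> pt set \<Rightarrow> pt set" where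
  "En_iter n 0 T = En n T"
| "En_iter n (Suc k) T = En n (En_iter n k T)"

definition En_inf :: "nat \<Rightarrow> pt set \<Rightarrow> pt set" where
  "En_inf n T = (\<Union>k. En_iter n k T)"

definition to_real2 :: "pt \<Rightarrow> real \<times> real" where
  "to_real2 v = (real_of_int (fst v), real_of_int (snd v))"

end

theory Submission
  imports Defs
begin

definition closedS :: "pt set \<Rightarrow> bool" where
  "closedS S \<longleftrightarrow> (\<forall>x\<in>S. \<forall>y\<in>S. \<forall>z\<in>S. in_N0sq (x - y + z) \<longrightarrow> x - y + z \<in> S)"

lemma rep_exists:
  assumes "x \<in> G" "y \<in> G" "z \<in> G"
  shows "\<exists>g m. is_rep G (x - y + z) g m \<and> rep_cost m \<le> 1"
proof (cases "x = y")
  case True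
  have "is_rep G (x - y + z) z (\<lambda>_. 0)" using assms True by (simp add: is_rep_def)
  moreover have "rep_cost (\<lambda>_. 0) \<le> 1" by (simp add: rep_cost_def)
  ultimately show ?thesis by blast
next
  case xy: False
  show ?thesis
  proof (cases "z = y")
    case True
    have "is_rep G (x - y + z) x (\<lambda>_. 0)" using assms True by (simp add: is_rep_def)
    moreover have "rep_cost (\<lambda>_. 0) \<le> 1" by (simp add: rep_cost_def)
    ultimately show ?thesis by blast
  next
    case zy: False
    show ?thesis
    proof (cases "x = z")
      case True
      define m :: "pt \<Rightarrow> int" where "m = (\<lambda>_. 0)(y := -1)"
      have s: "{a. m a \<noteq> 0} = {y}" by (auto simp: m_def)
      have "is_rep G (x - y + z) x m"
        using assms True xy unfolding is_rep_def s
        by (cases y, cases z) (auto simp: m_def smul_def)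
      moreover have "{a. m a > 0} = {}" "{a. m a < 0} = {y}" by (auto simp: m_def)
      then have "rep_cost m \<le> 1" by (simp add: rep_cost_def m_def)
      ultimately show ?thesis by blast
    next
      case xz: False
      define m :: "pt \<Rightarrow> int" where "m = (\<lambda>_. 0)(x := 1, y := -1)"
      have s: "{a. m a \<noteq> 0} = {x, y}" using xy by (auto simp: m_def)
      have "is_rep G (x - y + z) z m"
        using assms xy xz zy unfolding is_rep_def s
        by (auto simp: m_def smul_def prod_eq_iff)
      moreover have "{a. m a > 0} = {x}" "{a. m a < 0} = {y}" using xy by (auto simp: m_def)
      then have "rep_cost m \<le> 1" using xy by (simp add: rep_cost_def m_def)
      ultimately show ?thesis by blast
    qed
  qed
qed

lemma En1_closed:
  assumes "x \<in> G" "y \<in> G" "z \<in> G" "in_N0sq (x - y + z)"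
  shows "x - y + z \<in> En 1 G"
proof -
  obtain g m where r: "is_rep G (x - y + z) g m" and c: "rep_cost m \<le> 1"
    using rep_exists[OF assms(1-3)] by blast
  have "dG G (x - y + z) \<le> enat (rep_cost m)"
    unfolding dG_def by (rule INF_lower2[where i = "(g, m)"]) (use r in auto)
  also have "\<dots> \<le> enat 1" using c by simp
  finally have "dG G (x - y + z) \<le> enat 1" .
  moreover have "x - y + z \<in> Lam G" unfolding Lam_def using r by blast
  ultimately show ?thesis using assms(4) unfolding En_def by auto
qed

lemma En_N0: "En n G \<subseteq> {v. in_N0sq v}"
  by (auto simp: En_def)

lemma En_iter_N0: "En_iter n k T \<subseteq> {v. in_N0sq v}"
  by (cases k) (auto simp: En_def)

lemma sub_En1:
  assumes "G \<subseteq> {v. in_N0sq v}"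
  shows "G \<subseteq> En 1 G"
proof
  fix x assume "x \<in> G"
  then have "x - x + x \<in> En 1 G" using assms by (intro En1_closed) auto
  then show "x \<in> En 1 G" by simp
qed

lemma En_iter_mono_Suc: "En_iter 1 k T \<subseteq> En_iter 1 (Suc k) T"
  using sub_En1[OF En_iter_N0] by simp

lemma En_iter_mono: "i \<le> j \<Longrightarrow> En_iter 1 i T \<subseteq> En_iter 1 j T"
  by (induction j rule: dec_induct) (use En_iter_mono_Suc in blast)+

lemma closed_En_inf: "closedS (En_inf 1 T)"
  unfolding closedS_def
proof (intro ballI impI)
  fix x y z assume "x \<in> En_inf 1 T" "y \<in> En_inf 1 T" "z \<in> En_inf 1 T" and n: "in_N0sq (x - y + z)"
  then obtain i j k where "x \<in> En_iter 1 i T" "y \<in> En_iter 1 j T" "z \<in> En_iter 1 k T"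
    by (auto simp: En_inf_def)
  then have "x \<in> En_iter 1 (i+j+k) T" "y \<in> En_iter 1 (i+j+k) T" "z \<in> En_iter 1 (i+j+k) T"
    using En_iter_mono[of i "i+j+k" T] En_iter_mono[of j "i+j+k" T] En_iter_mono[of k "i+j+k" T]
    by auto
  then have "x - y + z \<in> En_iter 1 (Suc (i+j+k)) T" using En1_closed n by simp
  then show "x - y + z \<in> En_inf 1 T" unfolding En_inf_def by blast
qed

lemma En_inf_N0: "En_inf 1 T \<subseteq> {v. in_N0sq v}"
  using En_iter_N0 by (auto simp: En_inf_def)

lemma T_sub_En_inf:
  assumes "\<forall>v\<in>T. in_N0sq v"
  shows "T \<subseteq> En_inf 1 T"
proof -
  have "T \<subseteq> En 1 T" using assms by (intro sub_En1) auto
  moreover have "En 1 T = En_iter 1 0 T" by simp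
  ultimately show ?thesis unfolding En_inf_def by blast
qed


lemma coll_dep:
  assumes "collinear (to_real2 ` T)" "card T = 3"
  shows "affine_dependent (to_real2 ` T)"
proof -
  obtain a b c where T: "T = {a, b, c}" "a \<noteq> b" "b \<noteq> c" "a \<noteq> c"
    using assms(2) by (auto simp: card_3_iff)
  have inj: "inj to_real2" unfolding inj_def to_real2_def by (auto simp: prod_eq_iff)
  have "to_real2 ` T = {to_real2 a, to_real2 b, to_real2 c}" using T by auto
  moreover have "to_real2 a \<noteq> to_real2 b" "to_real2 b \<noteq> to_real2 c" "to_real2 a \<noteq> to_real2 c"
    using T inj by (auto dest: injD)
  ultimately show ?thesis using assms(1) collinear_3_eq_affine_dependent by metis
qed

lemma dominating_pair:
  assumes cl: "closedS S" and N: "S \<subseteq> {v. in_N0sq v}"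
    and TS: "T \<subseteq> S" and c3: "card T = 3" and ind: "\<not> affine_dependent (to_real2 ` T)"
  shows "\<exists>y\<in>S. \<exists>z\<in>S. y \<noteq> z \<and> fst y \<le> fst z \<and> snd y \<le> snd z"
proof (rule ccontr)
  assume "\<not> ?thesis"
  then have ac: "\<And>y z. y \<in> S \<Longrightarrow> z \<in> S \<Longrightarrow> fst y \<le> fst z \<Longrightarrow> snd y \<le> snd z \<Longrightarrow> y = z"
    by blast
  obtain a b c where T: "T = {a, b, c}" "a \<noteq> b" "b \<noteq> c" "a \<noteq> c"
    using c3 by (auto simp: card_3_iff)
  have "a \<in> S" using TS T by auto
  then obtain P where P: "P \<in> S" and Pmin: "\<And>w. w \<in> S \<Longrightarrow> nat (fst P) \<le> nat (fst w)"
    using ex_has_least_nat[of "\<lambda>w. w \<in> S" a "\<lambda>w. nat (fst w)"] by blast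
  have "\<exists>w. w \<in> S - {P}" using TS T by blast
  then obtain w0 where "w0 \<in> S - {P}" by blast
  then obtain M where M: "M \<in> S - {P}" and Mmin: "\<And>w. w \<in> S - {P} \<Longrightarrow> nat (fst M) \<le> nat (fst w)"
    using ex_has_least_nat[of "\<lambda>w. w \<in> S - {P}" w0 "\<lambda>w. nat (fst w)"] by blast
  have nP: "fst P \<ge> 0" "snd P \<ge> 0" using N P by (auto simp: in_N0sq_def)
  have nM: "fst M \<ge> 0" "snd M \<ge> 0" using N M by (auto simp: in_N0sq_def)
  have "fst P \<le> fst M" using Pmin[of M] M nP nM by auto
  moreover have "fst P \<noteq> fst M"
  proof
    assume e: "fst P = fst M"
    show False
    proof (cases "snd P \<le> snd M")
      case True then show False using ac[of P M] e P M by auto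
    next
      case False then show False using ac[of M P] e P M by auto
    qed
  qed
  ultimately have PM1: "fst P < fst M" by simp
  have PM2: "snd M < snd P" using ac[of P M] P M PM1 by force
  define d where "d = M - P"
  have claim: "\<forall>w\<in>S. nat (fst w) = n \<longrightarrow> (\<exists>k::nat. w = P + smul (int k) d)" for n
  proof (induction n rule: less_induct)
    case (less n)
    show ?case
    proof (intro ballI impI)
      fix w assume w: "w \<in> S" "nat (fst w) = n"
      show "\<exists>k::nat. w = P + smul (int k) d"
      proof (cases "w = P")
        case True then show ?thesis by (intro exI[of _ 0]) (simp add: smul_def zero_prod_def)
      next
        case False
        have nw: "fst w \<ge> 0" "snd w \<ge> 0" using N w by (auto simp: in_N0sq_def)
        have "fst M \<le> fst w" using Mmin[of w] w False nw nM by auto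
        then have n0: "in_N0sq (w - M + P)" using nw nP PM2 by (auto simp: in_N0sq_def)
        then have w'S: "w - M + P \<in> S" using cl w P M unfolding closedS_def by blast
        have "nat (fst (w - M + P)) < n" using w PM1 nP n0 by (auto simp: in_N0sq_def)
        then obtain k :: nat where "w - M + P = P + smul (int k) d"
          using less w'S by blast
        then have "w = P + smul (int (Suc k)) d"
          by (cases w, cases M, cases P) (auto simp: smul_def d_def algebra_simps)
        then show ?thesis by blast
      qed
    qed
  qed
  have "\<forall>x\<in>to_real2 ` T. \<exists>c. x = to_real2 P + c *\<^sub>R to_real2 d"
  proof
    fix x assume "x \<in> to_real2 ` T"
    then obtain t where t: "t \<in> T" "x = to_real2 t" by blast
    then obtain k :: nat where "t = P + smul (int k) d" using claim TS by blast
    then have "x = to_real2 P + real k *\<^sub>R to_real2 d"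
      using t by (cases P, cases d) (simp add: to_real2_def smul_def)
    then show "\<exists>c. x = to_real2 P + c *\<^sub>R to_real2 d" by blast
  qed
  then have "collinear (to_real2 ` T)" unfolding collinear_alt by blast
  then show False using coll_dep c3 ind by blast
qed

lemma push:
  assumes cl: "closedS S" and N: "S \<subseteq> {v. in_N0sq v}"
    and "\<alpha> \<in> S" "y \<in> S" "z \<in> S" "fst y \<le> fst z" "snd y \<le> snd z"
  shows "\<alpha> + smul (int k) (z - y) \<in> S"
proof (induction k)
  case 0 then show ?case using assms by (simp add: smul_def flip: zero_prod_def)
next
  case (Suc k)
  let ?q = "\<alpha> + smul (int k) (z - y)"
  have e: "\<alpha> + smul (int (Suc k)) (z - y) = ?q - y + z"
    by (cases \<alpha>, cases y, cases z) (simp add: smul_def algebra_simps)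
  have "in_N0sq \<alpha>" using N assms by auto
  moreover have "(int k + 1) * fst y \<le> (int k + 1) * fst z" "(int k + 1) * snd y \<le> (int k + 1) * snd z"
    using assms(6,7) by (simp_all add: mult_left_mono)
  ultimately have "in_N0sq (?q - y + z)"
    by (cases \<alpha>, cases y, cases z) (simp add: smul_def in_N0sq_def algebra_simps)
  then show ?case using e Suc cl assms unfolding closedS_def by metis
qed

lemma final_step:
  assumes cl: "closedS S" and N: "S \<subseteq> {v. in_N0sq v}"
    and S: "\<alpha> \<in> S" "t \<in> S" "y \<in> S" "z \<in> S" and le: "fst y \<le> fst z" "snd y \<le> snd z"
    and s: "s = 1 \<or> s = (-1::int)"
    and c1: "fst z - fst y > 0 \<or> s * (fst t - fst \<alpha>) > 0"
    and c2: "snd z - snd y > 0 \<or> s * (snd t - snd \<alpha>) > 0"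
  shows "\<exists>p\<in>S. fst p - fst \<alpha> > 0 \<and> snd p - snd \<alpha> > 0"
proof -
  define K where "K = \<bar>fst t - fst \<alpha>\<bar> + \<bar>snd t - snd \<alpha>\<bar> + 1"
  define k where "k = nat K"
  have kK: "int k = K" unfolding k_def K_def by simp
  have Kpos: "K > 0" unfolding K_def by simp
  define q where "q = \<alpha> + smul (int k) (z - y)"
  have qS: "q \<in> S" unfolding q_def using push[OF cl N S(1,3,4) le] .
  define p where "p = \<alpha> + smul (int k) (z - y) + smul s (t - \<alpha>)"
  have g1: "K * (fst z - fst y) + s * (fst t - fst \<alpha>) > 0"
  proof (cases "fst z - fst y > 0")
    case True
    then have "K * (fst z - fst y) \<ge> K" using Kpos by (simp add: mult_le_cancel_left1)
    moreover have "s * (fst t - fst \<alpha>) \<ge> - \<bar>fst t - fst \<alpha>\<bar>" using s by auto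
    ultimately show ?thesis unfolding K_def by linarith
  next
    case False
    then have "fst z - fst y = 0" using le by simp
    then show ?thesis using c1 False by simp
  qed
  have g2: "K * (snd z - snd y) + s * (snd t - snd \<alpha>) > 0"
  proof (cases "snd z - snd y > 0")
    case True
    then have "K * (snd z - snd y) \<ge> K" using Kpos by (simp add: mult_le_cancel_left1)
    moreover have "s * (snd t - snd \<alpha>) \<ge> - \<bar>snd t - snd \<alpha>\<bar>" using s by auto
    ultimately show ?thesis unfolding K_def by linarith
  next
    case False
    then have "snd z - snd y = 0" using le by simp
    then show ?thesis using c2 False by simp
  qed
  have pf: "fst p - fst \<alpha> = K * (fst z - fst y) + s * (fst t - fst \<alpha>)"
    "snd p - snd \<alpha> = K * (snd z - snd y) + s * (snd t - snd \<alpha>)"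
    unfolding p_def using kK by (simp_all add: smul_def)
  have na: "in_N0sq \<alpha>" using N S by auto
  have np: "in_N0sq p" using na pf g1 g2 by (auto simp: in_N0sq_def)
  have "p \<in> S"
  proof (cases "s = 1")
    case True
    then have "p = q - \<alpha> + t" unfolding p_def q_def
      by (cases \<alpha>, cases t) (simp add: smul_def)
    then show ?thesis using np cl qS S unfolding closedS_def by metis
  next
    case False
    then have "s = -1" using s by simp
    then have "p = q - t + \<alpha>" unfolding p_def q_def
      by (cases \<alpha>, cases t) (simp add: smul_def)
    then show ?thesis using np cl qS S unfolding closedS_def by metis
  qed
  then show ?thesis using pf g1 g2 by metis
qed


lemma exists_diff_fst:
  assumes "card T = 3" "\<not> affine_dependent (to_real2 ` T)"
  shows "\<exists>t\<in>T. fst t \<noteq> fst \<alpha>"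
proof (rule ccontr)
  assume "\<not> ?thesis"
  then have h: "\<forall>t\<in>T. fst t = fst \<alpha>" by blast
  have "\<forall>x\<in>to_real2 ` T. \<exists>c. x = (real_of_int (fst \<alpha>), 0) + c *\<^sub>R (0, 1)"
  proof
    fix x assume "x \<in> to_real2 ` T"
    then obtain t where "t \<in> T" "x = to_real2 t" by blast
    then have "x = (real_of_int (fst \<alpha>), 0) + real_of_int (snd t) *\<^sub>R (0, 1)"
      using h by (simp add: to_real2_def)
    then show "\<exists>c. x = (real_of_int (fst \<alpha>), 0) + c *\<^sub>R (0, 1)" by blast
  qed
  then have "collinear (to_real2 ` T)" unfolding collinear_alt by blast
  then show False using coll_dep assms by blast
qed

lemma exists_diff_snd:
  assumes "card T = 3" "\<not> affine_dependent (to_real2 ` T)"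
  shows "\<exists>t\<in>T. snd t \<noteq> snd \<alpha>"
proof (rule ccontr)
  assume "\<not> ?thesis"
  then have h: "\<forall>t\<in>T. snd t = snd \<alpha>" by blast
  have "\<forall>x\<in>to_real2 ` T. \<exists>c. x = (0, real_of_int (snd \<alpha>)) + c *\<^sub>R (1, 0)"
  proof
    fix x assume "x \<in> to_real2 ` T"
    then obtain t where "t \<in> T" "x = to_real2 t" by blast
    then have "x = (0, real_of_int (snd \<alpha>)) + real_of_int (fst t) *\<^sub>R (1, 0)"
      using h by (simp add: to_real2_def)
    then show "\<exists>c. x = (0, real_of_int (snd \<alpha>)) + c *\<^sub>R (1, 0)" by blast
  qed
  then have "collinear (to_real2 ` T)" unfolding collinear_alt by blast
  then show False using coll_dep assms by blast
qed

theorem lemma3p6: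
  fixes T :: "pt set"
  assumes "card T = 3"
    and "\<forall>v\<in>T. in_N0sq v"
    and "\<not> affine_dependent (to_real2 ` T)"
  shows "\<forall>\<alpha>\<in>T. \<exists>\<beta>\<in>En_inf 1 T - {\<alpha>}. fst \<beta> - fst \<alpha> > 0 \<and> snd \<beta> - snd \<alpha> > 0"
proof
  fix \<alpha> assume aT: "\<alpha> \<in> T"
  define S where "S = En_inf 1 T"
  have cl: "closedS S" unfolding S_def by (rule closed_En_inf)
  have N: "S \<subseteq> {v. in_N0sq v}" unfolding S_def by (rule En_inf_N0)
  have TS: "T \<subseteq> S" unfolding S_def using assms(2) by (rule T_sub_En_inf)
  obtain y z where yz: "y \<in> S" "z \<in> S" "y \<noteq> z" "fst y \<le> fst z" "snd y \<le> snd z"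
    using dominating_pair[OF cl N TS assms(1,3)] by blast
  have aS: "\<alpha> \<in> S" using aT TS by blast
  have "\<exists>p\<in>S. fst p - fst \<alpha> > 0 \<and> snd p - snd \<alpha> > 0"
  proof (cases "fst z - fst y > 0 \<and> snd z - snd y > 0")
    case True
    then show ?thesis using final_step[OF cl N aS aS yz(1,2,4,5), of 1] by auto
  next
    case False
    show ?thesis
    proof (cases "fst z - fst y > 0")
      case True
      then have s0: "snd z - snd y = 0" using False yz by auto
      obtain t where t: "t \<in> T" "snd t \<noteq> snd \<alpha>" using exists_diff_snd[OF assms(1,3)] by blast
      define s :: int where "s = (if snd t > snd \<alpha> then 1 else -1)"
      have "s * (snd t - snd \<alpha>) > 0" using t(2) unfolding s_def by auto
      then show ?thesis using final_step[OF cl N aS _ yz(1,2,4,5), of t s] t TS True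
        unfolding s_def by auto
    next
      case f0: False
      then have "fst z - fst y = 0" using yz by auto
      then have "snd z - snd y > 0" using yz by (auto simp: prod_eq_iff)
      obtain t where t: "t \<in> T" "fst t \<noteq> fst \<alpha>" using exists_diff_fst[OF assms(1,3)] by blast
      define s :: int where "s = (if fst t > fst \<alpha> then 1 else -1)"
      have "s * (fst t - fst \<alpha>) > 0" using t(2) unfolding s_def by auto
      then show ?thesis using final_step[OF cl N aS _ yz(1,2,4,5), of t s] t TS \<open>snd z - snd y > 0\<close>
        unfolding s_def by auto
    qed
  qed
  then obtain p where "p \<in> S" "fst p - fst \<alpha> > 0" "snd p - snd \<alpha> > 0" by blast
  moreover then have "p \<noteq> \<alpha>" by auto
  ultimately show "\<exists>\<beta>\<in>En_inf 1 T - {\<alpha>}. fst \<beta> - fst \<alpha> > 0 \<and> snd \<beta> - snd \<alpha> > 0"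
    unfolding S_def by blast
qed

end
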